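(* Let $f_1,\dots,f_n:\mathbb{R}^d\to\mathbb{R}$ be convex with each $f_i$ being $L_i$-smooth, and suppose $f = \frac{1}{n}\sum_{i=1}^n f_i$ is $L$-smooth; let $x^*$ be a minimizer of $f$. Let $\mathcal{C}_1,\dots,\mathcal{C}_n$ be independent randomized compression operators with $\mathcal{C}_i\in\mathbb{B}^d(\omega_i)$. For points $x^k, h_1^k,\dots,h_n^k\in\mathbb{R}^d$ let $g^k = \frac{1}{n}\sum_{i=1}^n\left[h_i^k + \mathcal{C}_i(\nabla f_i(x^k) - h_i^k)\right]$. Then \[ \mathbb{E}\|g^k - \nabla f(x^* )\|^2 \leq 2\left(L + \frac{2\max_i\{L_i\omega_i\}}{n}\right)D_f(x^k,x^* ) + \frac{2}{n}\sigma_k^2, \] where $\sigma_k^2 = \frac{1}{n}\sum_{i=1}^n\omega_i\|h_i^k - \nabla f_i(x^* )\|^2$ and the expectation is over the compressors.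
   Context: A (random) operator $\mathcal{C}$ belongs to $\mathbb{B}^d(\omega)$ if $\mathbb{E}[\mathcal{C}(x)] = x$ and $\mathbb{E}\|\mathcal{C}(x)-x\|^2\leq\omega\|x\|^2$ for all $x$. The Bregman divergence is $D_f(x,y) = f(x)-f(y)-\langle\nabla f(y),x-y\rangle$. A differentiable $g$ is $L$-smooth if $\|\nabla g(x)-\nabla g(y)\|\leq L\|x-y\|$ for all $x,y$. *)

theory Defs
  imports "HOL-Probability.Probability"
begin

definition has_gradient :: "('a::euclidean_space \<Rightarrow> real) \<Rightarrow> ('a \<Rightarrow> 'a) \<Rightarrow> bool" where
  "has_gradient F G \<longleftrightarrow> (\<forall>x. (F has_derivative (\<lambda>h. G x \<bullet> h)) (at x))"

definition L_smooth :: "('a::euclidean_space \<Rightarrow> real) \<Rightarrow> ('a \<Rightarrow> 'a) \<Rightarrow> real \<Rightarrow> bool" where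
  "L_smooth F G L \<longleftrightarrow> has_gradient F G \<and> (\<forall>x y. norm (G x - G y) \<le> L * norm (x - y))"

definition bregman :: "('a::euclidean_space \<Rightarrow> real) \<Rightarrow> ('a \<Rightarrow> 'a) \<Rightarrow> 'a \<Rightarrow> 'a \<Rightarrow> real" where
  "bregman F G x y = F x - F y - G y \<bullet> (x - y)"

definition op_space :: "('a::euclidean_space \<Rightarrow> 'a) measure" where
  "op_space = PiM UNIV (\<lambda>_. borel)"

text \<open>Random operator C on probability space M in the class B^d(w):
  unbiased and with relative variance bounded by w.\<close>
definition in_B :: "'m measure \<Rightarrow> ('m \<Rightarrow> 'a::euclidean_space \<Rightarrow> 'a) \<Rightarrow> real \<Rightarrow> bool" where
  "in_B M C w \<longleftrightarrow> 0 \<le> w \<and> C \<in> measurable M op_space \<and>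
     (\<forall>x. integrable M (\<lambda>\<omega>. C \<omega> x) \<and> (\<integral>\<omega>. C \<omega> x \<partial>M) = x \<and>
          (\<integral>\<^sup>+\<omega>. ennreal ((norm (C \<omega> x - x))\<^sup>2) \<partial>M) \<le> ennreal (w * (norm x)\<^sup>2))"

end

theory Submission imports Defs begin

lemma line_deriv:
  assumes "has_gradient F G"
  shows "((\<lambda>t. F (x + t *\<^sub>R d)) has_real_derivative (G (x + t *\<^sub>R d) \<bullet> d)) (at t)"
proof -
  have 1: "((\<lambda>t. x + t *\<^sub>R d) has_derivative (\<lambda>s. s *\<^sub>R d)) (at t)"
    by (auto intro!: derivative_eq_intros)
  have 2: "(F has_derivative (\<lambda>h. G (x + t *\<^sub>R d) \<bullet> h)) (at (x + t *\<^sub>R d))"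
    using assms unfolding has_gradient_def by blast
  have "((\<lambda>t. F (x + t *\<^sub>R d)) has_derivative (\<lambda>s. G (x + t *\<^sub>R d) \<bullet> (s *\<^sub>R d))) (at t)"
    using has_derivative_compose[OF 1 2] by simp
  moreover have "(\<lambda>s. G (x + t *\<^sub>R d) \<bullet> (s *\<^sub>R d)) = (*) (G (x + t *\<^sub>R d) \<bullet> d)"
    by (rule ext) (simp add: mult.commute)
  ultimately show ?thesis unfolding has_field_derivative_def by simp
qed

lemma tangent:
  assumes cv: "convex_on UNIV F" and g: "has_gradient F G"
  shows "F y + G y \<bullet> (z - y) \<le> F z"
proof -
  define g where "g = (\<lambda>t::real. F (y + t *\<^sub>R (z - y)))"
  have conv: "convex_on UNIV g"
  proof (rule convex_onI)
    fix t u v :: real assume "t > 0" "t < 1"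
    have "y + ((1 - t) *\<^sub>R u + t *\<^sub>R v) *\<^sub>R (z - y)
          = (1 - t) *\<^sub>R (y + u *\<^sub>R (z - y)) + t *\<^sub>R (y + v *\<^sub>R (z - y))"
      by (simp add: algebra_simps)
    then show "g ((1 - t) *\<^sub>R u + t *\<^sub>R v) \<le> (1 - t) * g u + t * g v"
      unfolding g_def using convex_onD[OF cv, of t] \<open>t > 0\<close> \<open>t < 1\<close> by simp
  qed simp
  have d: "(g has_real_derivative G y \<bullet> (z - y)) (at 0 within UNIV)"
    using line_deriv[OF g, of y "z - y" 0] unfolding g_def by simp
  have "g 1 - g 0 \<ge> G y \<bullet> (z - y) * (1 - 0)"
    by (rule convex_on_imp_above_tangent[OF conv connected_UNIV _ _ d]) auto
  then show ?thesis unfolding g_def by simp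
qed

lemma descent:
  assumes g: "has_gradient F G" and lip: "\<forall>x y. norm (G x - G y) \<le> L * norm (x - y)"
  shows "F z \<le> F x + G x \<bullet> (z - x) + L / 2 * (norm (z - x))\<^sup>2"
proof -
  define d where "d = z - x"
  define h where "h = (\<lambda>t. F (x + t *\<^sub>R d) - t * (G x \<bullet> d) - L / 2 * t\<^sup>2 * (norm d)\<^sup>2)"
  define h' where "h' = (\<lambda>t. G (x + t *\<^sub>R d) \<bullet> d - G x \<bullet> d - L * t * (norm d)\<^sup>2)"
  have D: "(h has_real_derivative h' t) (at t)" for t
    unfolding h_def h'_def
    by (rule derivative_eq_intros line_deriv[OF g] refl)+ (simp add: power2_eq_square)
  obtain \<xi> where xi: "0 < \<xi>" "\<xi> < 1" "h 1 - h 0 = (1 - 0) * h' \<xi>"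
    using MVT2[of 0 1 h h'] D by auto
  have "G (x + \<xi> *\<^sub>R d) \<bullet> d - G x \<bullet> d = (G (x + \<xi> *\<^sub>R d) - G x) \<bullet> d"
    by (simp add: inner_diff_left)
  also have "\<dots> \<le> norm (G (x + \<xi> *\<^sub>R d) - G x) * norm d"
    by (rule norm_cauchy_schwarz)
  also have "\<dots> \<le> L * norm (\<xi> *\<^sub>R d) * norm d"
    using lip[rule_format, of "x + \<xi> *\<^sub>R d" x] by (intro mult_right_mono) auto
  also have "\<dots> = L * \<xi> * (norm d)\<^sup>2"
    using xi by (simp add: power2_eq_square)
  finally have "h' \<xi> \<le> 0" unfolding h'_def by simp
  then have "h 1 \<le> h 0" using xi by simp
  then show ?thesis unfolding h_def d_def by simp
qed

lemma cocoercive: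
  fixes F :: "'a::euclidean_space \<Rightarrow> real"
  assumes cv: "convex_on UNIV F" and sm: "L_smooth F G L"
  shows "(norm (G x - G y))\<^sup>2 \<le> 2 * L * bregman F G x y"
proof -
  have g: "has_gradient F G" and lip: "\<forall>x y. norm (G x - G y) \<le> L * norm (x - y)"
    using sm unfolding L_smooth_def by auto
  obtain e :: 'a where e: "e \<in> Basis" using nonempty_Basis by blast
  have "0 \<le> L * norm ((y + e) - y)" using lip[rule_format, of "y + e" y] norm_ge_zero order_trans by blast
  then have L0: "L \<ge> 0" using e by simp
  have B0: "bregman F G x y \<ge> 0" using tangent[OF cv g, of y x] unfolding bregman_def by simp
  show ?thesis
  proof (cases "L = 0")
    case True
    then have "norm (G x - G y) \<le> 0" using lip by auto
    then show ?thesis using True by simp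
  next
    case False
    then have Lp: "L > 0" using L0 by simp
    define g where "g = G x - G y"
    define z where "z = x - (1 / L) *\<^sub>R g"
    have t1: "F y + G y \<bullet> (z - y) \<le> F z" by (rule tangent[OF cv g])
    have t2: "F z \<le> F x + G x \<bullet> (z - x) + L / 2 * (norm (z - x))\<^sup>2" by (rule descent[OF g lip])
    have e1: "G y \<bullet> (z - y) = G y \<bullet> (x - y) - (1/L) * (G y \<bullet> g)"
      by (simp add: z_def inner_diff_right algebra_simps)
    have e2: "G x \<bullet> (z - x) = - (1/L) * (G x \<bullet> g)"
      by (simp add: z_def)
    have e3: "(norm (z - x))\<^sup>2 = (1/L)^2 * (norm g)\<^sup>2"
      using Lp by (simp add: z_def power2_eq_square)
    have e4: "G x \<bullet> g - G y \<bullet> g = (norm g)\<^sup>2"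
      by (simp add: g_def power2_norm_eq_inner inner_diff_left)
    have "F y + G y \<bullet> (x - y) - (1/L) * (G y \<bullet> g) \<le> F x - (1/L) * (G x \<bullet> g) + L / 2 * ((1/L)^2 * (norm g)\<^sup>2)"
      using t1 t2 e1 e2 e3 by simp
    then have "(1/L) * (G x \<bullet> g - G y \<bullet> g) - L / 2 * ((1/L)^2 * (norm g)\<^sup>2) \<le> bregman F G x y"
      unfolding bregman_def by (simp add: algebra_simps)
    then have "(1/L) * (norm g)\<^sup>2 - (1/(2*L)) * (norm g)\<^sup>2 \<le> bregman F G x y"
      using e4 Lp by (simp add: power2_eq_square field_simps)
    then have "(norm g)\<^sup>2 / (2 * L) \<le> bregman F G x y"
      using Lp by (simp add: field_simps)
    then show ?thesis using Lp unfolding g_def by (simp add: field_simps)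
  qed
qed

lemma convex_sum:
  assumes "finite I" "\<And>i. i \<in> I \<Longrightarrow> convex_on UNIV (f i)"
  shows "convex_on UNIV (\<lambda>x. \<Sum>i\<in>I. f i x)"
  using assms
proof (induction I rule: finite_induct)
  case empty then show ?case by (simp add: convex_on_const)
next
  case (insert a I) then show ?case by (auto intro!: convex_on_add)
qed

lemma norm_expand:
  fixes c S :: "'a::real_inner"
  shows "(norm (c + t *\<^sub>R S))\<^sup>2 = c \<bullet> c + 2 * t * (c \<bullet> S) + t\<^sup>2 * (S \<bullet> S)"
  unfolding power2_norm_eq_inner by (simp add: inner_add_left inner_add_right inner_commute[of S c] power2_eq_square algebra_simps)

lemma prob_part:
  fixes M :: "'m measure" and n :: nat and C :: "nat \<Rightarrow> 'm \<Rightarrow> 'a::euclidean_space \<Rightarrow> 'a"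
    and a :: "nat \<Rightarrow> 'a" and c :: 'a and w :: "nat \<Rightarrow> real"
  assumes P: "prob_space M"
    and B: "\<And>i. i < n \<Longrightarrow> in_B M (C i) (w i)"
    and ind: "prob_space.indep_vars M (\<lambda>_. op_space) C {..<n}"
  shows "(\<integral>\<^sup>+\<omega>. ennreal ((norm (c + (1 / real n) *\<^sub>R (\<Sum>i<n. C i \<omega> (a i) - a i)))\<^sup>2) \<partial>M)
         \<le> ennreal ((norm c)\<^sup>2 + (1 / real n)\<^sup>2 * (\<Sum>i<n. w i * (norm (a i))\<^sup>2))"
proof -
  interpret prob_space M by (rule P)
  define Y where "Y = (\<lambda>i \<omega>. C i \<omega> (a i) - a i)"
  have Cm: "(\<lambda>\<omega>. C i \<omega> x) \<in> borel_measurable M" if "i < n" for i x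
  proof -
    have "C i \<in> measurable M op_space" using B[OF that] unfolding in_B_def by auto
    then show ?thesis unfolding op_space_def
      by (rule measurable_compose[OF _ measurable_component_singleton]) auto
  qed
  have Ym: "Y i \<in> borel_measurable M" if "i < n" for i
    unfolding Y_def using Cm[OF that] by measurable
  have Yint: "integrable M (Y i)" if "i < n" for i
    unfolding Y_def using B[OF that] unfolding in_B_def by auto
  have Ymean: "integral\<^sup>L M (Y i) = 0" if "i < n" for i
    unfolding Y_def using B[OF that] unfolding in_B_def by (simp add: prob_space)
  have Yvar_nn: "(\<integral>\<^sup>+\<omega>. ennreal ((norm (Y i \<omega>))\<^sup>2) \<partial>M) \<le> ennreal (w i * (norm (a i))\<^sup>2)" if "i < n" for i
    unfolding Y_def using B[OF that] unfolding in_B_def by auto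
  have Y2int: "integrable M (\<lambda>\<omega>. (norm (Y i \<omega>))\<^sup>2)" if "i < n" for i
  proof (subst integrable_iff_bounded, intro conjI)
    show "(\<lambda>\<omega>. (norm (Y i \<omega>))\<^sup>2) \<in> borel_measurable M" using Ym[OF that] by measurable
    have "(\<integral>\<^sup>+\<omega>. ennreal (norm ((norm (Y i \<omega>))\<^sup>2)) \<partial>M) = (\<integral>\<^sup>+\<omega>. ennreal ((norm (Y i \<omega>))\<^sup>2) \<partial>M)"
      by simp
    also have "\<dots> < \<infinity>" using Yvar_nn[OF that] by (simp add: order_le_less_trans)
    finally show "(\<integral>\<^sup>+\<omega>. ennreal (norm ((norm (Y i \<omega>))\<^sup>2)) \<partial>M) < \<infinity>" .
  qed
  have Yvar: "integral\<^sup>L M (\<lambda>\<omega>. (norm (Y i \<omega>))\<^sup>2) \<le> w i * (norm (a i))\<^sup>2" if "i < n" for i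
  proof -
    have "ennreal (integral\<^sup>L M (\<lambda>\<omega>. (norm (Y i \<omega>))\<^sup>2)) = (\<integral>\<^sup>+\<omega>. ennreal ((norm (Y i \<omega>))\<^sup>2) \<partial>M)"
      by (rule nn_integral_eq_integral[symmetric]) (use Y2int[OF that] in auto)
    with Yvar_nn[OF that] have "ennreal (integral\<^sup>L M (\<lambda>\<omega>. (norm (Y i \<omega>))\<^sup>2)) \<le> ennreal (w i * (norm (a i))\<^sup>2)"
      by simp
    moreover have "0 \<le> w i" using B[OF that] unfolding in_B_def by auto
    ultimately show ?thesis by (simp add: ennreal_le_iff)
  qed
  have YYint: "integrable M (\<lambda>\<omega>. Y i \<omega> \<bullet> Y j \<omega>)" if "i < n" "j < n" for i j
  proof (rule Bochner_Integration.integrable_bound[OF Bochner_Integration.integrable_add[OF Y2int[OF that(1)] Y2int[OF that(2)]]])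
    show "(\<lambda>\<omega>. Y i \<omega> \<bullet> Y j \<omega>) \<in> borel_measurable M" using Ym that by measurable
    show "AE \<omega> in M. norm (Y i \<omega> \<bullet> Y j \<omega>) \<le> norm ((norm (Y i \<omega>))\<^sup>2 + (norm (Y j \<omega>))\<^sup>2)"
    proof (rule AE_I2)
      fix \<omega>
      have "\<bar>Y i \<omega> \<bullet> Y j \<omega>\<bar> \<le> norm (Y i \<omega>) * norm (Y j \<omega>)" by (rule Cauchy_Schwarz_ineq2)
      also have "\<dots> \<le> (norm (Y i \<omega>))\<^sup>2 + (norm (Y j \<omega>))\<^sup>2"
      proof -
        have "2 * norm (Y i \<omega>) * norm (Y j \<omega>) \<le> (norm (Y i \<omega>))\<^sup>2 + (norm (Y j \<omega>))\<^sup>2"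
          by (rule sum_squares_bound)
        moreover have "0 \<le> norm (Y i \<omega>) * norm (Y j \<omega>)" by simp
        ultimately show ?thesis unfolding mult.assoc by linarith
      qed
      finally show "norm (Y i \<omega> \<bullet> Y j \<omega>) \<le> norm ((norm (Y i \<omega>))\<^sup>2 + (norm (Y j \<omega>))\<^sup>2)" by simp
    qed
  qed
  have Rind: "indep_vars (\<lambda>_. borel) (\<lambda>i \<omega>. Y i \<omega> \<bullet> b) {..<n}" for b
  proof -
    have "indep_vars (\<lambda>_. borel) (\<lambda>i \<omega>. (\<lambda>G. (G (a i) - a i) \<bullet> b) (C i \<omega>)) {..<n}"
    proof (rule indep_vars_compose2[OF ind])
      fix i assume "i \<in> {..<n}"
      have 1: "(\<lambda>G. G (a i)) \<in> measurable op_space borel"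
        unfolding op_space_def by (rule measurable_component_singleton) simp
      have 2: "(\<lambda>v. (v - a i) \<bullet> b) \<in> borel_measurable borel"
        by (intro borel_measurable_continuous_onI continuous_intros)
      show "(\<lambda>G. (G (a i) - a i) \<bullet> b) \<in> measurable op_space borel"
        using measurable_compose[OF 1 2] by simp
    qed
    then show ?thesis unfolding Y_def by simp
  qed
  have YYzero: "integral\<^sup>L M (\<lambda>\<omega>. Y i \<omega> \<bullet> Y j \<omega>) = 0" if "i < n" "j < n" "i \<noteq> j" for i j
  proof -
    have "integral\<^sup>L M (\<lambda>\<omega>. Y i \<omega> \<bullet> Y j \<omega>) = integral\<^sup>L M (\<lambda>\<omega>. \<Sum>b\<in>Basis. (Y i \<omega> \<bullet> b) * (Y j \<omega> \<bullet> b))"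
      by (rule Bochner_Integration.integral_cong[OF refl]) (rule euclidean_inner)
    also have "\<dots> = (\<Sum>b\<in>Basis. integral\<^sup>L M (\<lambda>\<omega>. (Y i \<omega> \<bullet> b) * (Y j \<omega> \<bullet> b)))"
    proof (rule Bochner_Integration.integral_sum)
      fix b :: 'a assume "b \<in> Basis"
      have iv: "indep_var borel ((\<lambda>F. F i) \<circ> (\<lambda>\<omega>. restrict (\<lambda>k. Y k \<omega> \<bullet> b) {i}))
                  borel ((\<lambda>F. F j) \<circ> (\<lambda>\<omega>. restrict (\<lambda>k. Y k \<omega> \<bullet> b) {j}))"
        using that by (intro indep_var_compose[OF indep_var_restrict[OF Rind]]) auto
      then have iv': "indep_var borel (\<lambda>\<omega>. Y i \<omega> \<bullet> b) borel (\<lambda>\<omega>. Y j \<omega> \<bullet> b)"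
        by (simp add: comp_def)
      show "integrable M (\<lambda>\<omega>. (Y i \<omega> \<bullet> b) * (Y j \<omega> \<bullet> b))"
        by (rule indep_var_integrable[OF iv']) (use Yint that in auto)
    qed
    also have "\<dots> = 0"
    proof (rule sum.neutral, rule ballI)
      fix b :: 'a assume "b \<in> Basis"
      have iv: "indep_var borel ((\<lambda>F. F i) \<circ> (\<lambda>\<omega>. restrict (\<lambda>k. Y k \<omega> \<bullet> b) {i}))
                  borel ((\<lambda>F. F j) \<circ> (\<lambda>\<omega>. restrict (\<lambda>k. Y k \<omega> \<bullet> b) {j}))"
        using that by (intro indep_var_compose[OF indep_var_restrict[OF Rind]]) auto
      then have iv': "indep_var borel (\<lambda>\<omega>. Y i \<omega> \<bullet> b) borel (\<lambda>\<omega>. Y j \<omega> \<bullet> b)"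
        by (simp add: comp_def)
      have "integral\<^sup>L M (\<lambda>\<omega>. (Y i \<omega> \<bullet> b) * (Y j \<omega> \<bullet> b)) = integral\<^sup>L M (\<lambda>\<omega>. Y i \<omega> \<bullet> b) * integral\<^sup>L M (\<lambda>\<omega>. Y j \<omega> \<bullet> b)"
        by (rule indep_var_lebesgue_integral[OF iv']) (use Yint that in auto)
      also have "\<dots> = 0" using Ymean Yint that by simp
      finally show "integral\<^sup>L M (\<lambda>\<omega>. (Y i \<omega> \<bullet> b) * (Y j \<omega> \<bullet> b)) = 0" .
    qed
    finally show ?thesis .
  qed
  define E where "E = (\<lambda>\<omega>. (norm c)\<^sup>2 + 2 / real n * (\<Sum>i<n. c \<bullet> Y i \<omega>)
                          + (1 / real n)\<^sup>2 * (\<Sum>i<n. \<Sum>j<n. Y i \<omega> \<bullet> Y j \<omega>))"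
  have pw: "(norm (c + (1 / real n) *\<^sub>R (\<Sum>i<n. C i \<omega> (a i) - a i)))\<^sup>2 = E \<omega>" for \<omega>
  proof -
    have "(norm (c + (1 / real n) *\<^sub>R (\<Sum>i<n. Y i \<omega>)))\<^sup>2
       = c \<bullet> c + 2 * (1 / real n) * (c \<bullet> (\<Sum>i<n. Y i \<omega>)) + (1 / real n)\<^sup>2 * ((\<Sum>i<n. Y i \<omega>) \<bullet> (\<Sum>i<n. Y i \<omega>))"
      by (rule norm_expand)
    also have "\<dots> = E \<omega>"
    proof -
      have sw: "(\<Sum>y<n. \<Sum>x<n. Y x \<omega> \<bullet> Y y \<omega>) = (\<Sum>i<n. \<Sum>j<n. Y i \<omega> \<bullet> Y j \<omega>)"
        by (rule sum.swap)
      show ?thesis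
        unfolding E_def inner_sum_left inner_sum_right power2_norm_eq_inner using sw by simp
    qed
    finally show ?thesis by (simp add: Y_def)
  qed
    have ci: "integrable M (\<lambda>\<omega>. c \<bullet> Y i \<omega>)" if "i < n" for i
      using Yint[OF that] by auto
    have int1: "integrable M (\<lambda>\<omega>. 2 / real n * (\<Sum>i<n. c \<bullet> Y i \<omega>))"
      by (intro Bochner_Integration.integrable_mult_right Bochner_Integration.integrable_sum ci) auto
    have int2: "integrable M (\<lambda>\<omega>. (1 / real n)\<^sup>2 * (\<Sum>i<n. \<Sum>j<n. Y i \<omega> \<bullet> Y j \<omega>))"
      by (intro Bochner_Integration.integrable_mult_right Bochner_Integration.integrable_sum YYint) auto
  have Eint: "integrable M E"
    unfolding E_def
    by (intro Bochner_Integration.integrable_add int1 int2 integrable_const)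
  have "integral\<^sup>L M E = (norm c)\<^sup>2 + 2 / real n * (\<Sum>i<n. integral\<^sup>L M (\<lambda>\<omega>. c \<bullet> Y i \<omega>))
                          + (1 / real n)\<^sup>2 * (\<Sum>i<n. \<Sum>j<n. integral\<^sup>L M (\<lambda>\<omega>. Y i \<omega> \<bullet> Y j \<omega>))"
  proof -
    have I1: "integral\<^sup>L M (\<lambda>\<omega>. \<Sum>i<n. c \<bullet> Y i \<omega>) = (\<Sum>i<n. integral\<^sup>L M (\<lambda>\<omega>. c \<bullet> Y i \<omega>))"
      by (rule Bochner_Integration.integral_sum) (use ci in auto)
    have I2: "integral\<^sup>L M (\<lambda>\<omega>. \<Sum>i<n. \<Sum>j<n. Y i \<omega> \<bullet> Y j \<omega>) = (\<Sum>i<n. \<Sum>j<n. integral\<^sup>L M (\<lambda>\<omega>. Y i \<omega> \<bullet> Y j \<omega>))"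
    proof -
      have "integral\<^sup>L M (\<lambda>\<omega>. \<Sum>i<n. \<Sum>j<n. Y i \<omega> \<bullet> Y j \<omega>) = (\<Sum>i<n. integral\<^sup>L M (\<lambda>\<omega>. \<Sum>j<n. Y i \<omega> \<bullet> Y j \<omega>))"
        by (rule Bochner_Integration.integral_sum) (intro Bochner_Integration.integrable_sum YYint, auto)
      also have "\<dots> = (\<Sum>i<n. \<Sum>j<n. integral\<^sup>L M (\<lambda>\<omega>. Y i \<omega> \<bullet> Y j \<omega>))"
        by (rule sum.cong[OF refl], rule Bochner_Integration.integral_sum) (use YYint in auto)
      finally show ?thesis .
    qed
    have "integral\<^sup>L M E = integral\<^sup>L M (\<lambda>\<omega>. (norm c)\<^sup>2 + 2 / real n * (\<Sum>i<n. c \<bullet> Y i \<omega>))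
                + integral\<^sup>L M (\<lambda>\<omega>. (1 / real n)\<^sup>2 * (\<Sum>i<n. \<Sum>j<n. Y i \<omega> \<bullet> Y j \<omega>))"
      unfolding E_def by (rule Bochner_Integration.integral_add) (use int1 int2 in auto)
    also have "integral\<^sup>L M (\<lambda>\<omega>. (norm c)\<^sup>2 + 2 / real n * (\<Sum>i<n. c \<bullet> Y i \<omega>))
       = integral\<^sup>L M (\<lambda>\<omega>. (norm c)\<^sup>2) + integral\<^sup>L M (\<lambda>\<omega>. 2 / real n * (\<Sum>i<n. c \<bullet> Y i \<omega>))"
      by (rule Bochner_Integration.integral_add) (use int1 in auto)
    finally show ?thesis
      by (simp only: integral_mult_right_zero I1 I2 integral_const) (simp add: prob_space)
  qed
  also have "\<dots> = (norm c)\<^sup>2 + (1 / real n)\<^sup>2 * (\<Sum>i<n. integral\<^sup>L M (\<lambda>\<omega>. (norm (Y i \<omega>))\<^sup>2))"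
  proof -
    have "(\<Sum>i<n. integral\<^sup>L M (\<lambda>\<omega>. c \<bullet> Y i \<omega>)) = 0"
    proof -
      have "(\<Sum>i<n. integral\<^sup>L M (\<lambda>\<omega>. c \<bullet> Y i \<omega>)) = (\<Sum>i<n. 0)"
        by (rule sum.cong[OF refl]) (simp add: Yint Ymean)
      then show ?thesis by simp
    qed
    moreover have "(\<Sum>j<n. integral\<^sup>L M (\<lambda>\<omega>. Y i \<omega> \<bullet> Y j \<omega>)) = integral\<^sup>L M (\<lambda>\<omega>. (norm (Y i \<omega>))\<^sup>2)"
      if "i < n" for i
    proof -
      have "(\<Sum>j<n. integral\<^sup>L M (\<lambda>\<omega>. Y i \<omega> \<bullet> Y j \<omega>)) = (\<Sum>j<n. if j = i then integral\<^sup>L M (\<lambda>\<omega>. (norm (Y i \<omega>))\<^sup>2) else 0)"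
        using YYzero that by (intro sum.cong) (auto simp: power2_norm_eq_inner)
      also have "\<dots> = integral\<^sup>L M (\<lambda>\<omega>. (norm (Y i \<omega>))\<^sup>2)" using that by simp
      finally show ?thesis .
    qed
    ultimately show ?thesis by simp
  qed
  also have "\<dots> \<le> (norm c)\<^sup>2 + (1 / real n)\<^sup>2 * (\<Sum>i<n. w i * (norm (a i))\<^sup>2)"
    using Yvar by (intro add_left_mono mult_left_mono sum_mono) auto
  finally have Ile: "integral\<^sup>L M E \<le> (norm c)\<^sup>2 + (1 / real n)\<^sup>2 * (\<Sum>i<n. w i * (norm (a i))\<^sup>2)" .
  have "(\<integral>\<^sup>+\<omega>. ennreal ((norm (c + (1 / real n) *\<^sub>R (\<Sum>i<n. C i \<omega> (a i) - a i)))\<^sup>2) \<partial>M)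
        = (\<integral>\<^sup>+\<omega>. ennreal (E \<omega>) \<partial>M)" by (rule nn_integral_cong) (simp only: pw)
  also have "\<dots> = ennreal (integral\<^sup>L M E)"
    by (rule nn_integral_eq_integral[OF Eint]) (simp add: pw[symmetric])
  also have "\<dots> \<le> ennreal ((norm c)\<^sup>2 + (1 / real n)\<^sup>2 * (\<Sum>i<n. w i * (norm (a i))\<^sup>2))"
    using Ile by (rule ennreal_leI)
  finally show ?thesis .
qed

theorem lemma3:
  fixes M :: "'m measure"
    and n :: nat
    and f :: "nat \<Rightarrow> 'a::euclidean_space \<Rightarrow> real"
    and gf :: "nat \<Rightarrow> 'a \<Rightarrow> 'a"
    and Li :: "nat \<Rightarrow> real" and L :: real
    and xstar xk :: 'a
    and h :: "nat \<Rightarrow> 'a"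
    and C :: "nat \<Rightarrow> 'm \<Rightarrow> 'a \<Rightarrow> 'a"
    and w :: "nat \<Rightarrow> real"
  assumes "prob_space M"
    and "n \<ge> 1"
    and "\<And>i. i < n \<Longrightarrow> convex_on UNIV (f i)"
    and "\<And>i. i < n \<Longrightarrow> L_smooth (f i) (gf i) (Li i)"
    and "L_smooth (\<lambda>x. (1 / real n) * (\<Sum>i<n. f i x))
                   (\<lambda>x. (1 / real n) *\<^sub>R (\<Sum>i<n. gf i x)) L"
    and "\<forall>y. (1 / real n) * (\<Sum>i<n. f i xstar) \<le> (1 / real n) * (\<Sum>i<n. f i y)"
    and "\<And>i. i < n \<Longrightarrow> in_B M (C i) (w i)"
    and "prob_space.indep_vars M (\<lambda>_. op_space) C {..<n}"
  shows "(\<integral>\<^sup>+\<omega>. ennreal ((norm ((1 / real n) *\<^sub>R (\<Sum>i<n. h i + C i \<omega> (gf i xk - h i))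
                           - (1 / real n) *\<^sub>R (\<Sum>i<n. gf i xstar)))\<^sup>2) \<partial>M)
         \<le> ennreal (2 * (L + 2 * Max ((\<lambda>i. Li i * w i) ` {..<n}) / real n)
                      * bregman (\<lambda>x. (1 / real n) * (\<Sum>i<n. f i x))
                                (\<lambda>x. (1 / real n) *\<^sub>R (\<Sum>i<n. gf i x)) xk xstar
                    + (2 / real n) * ((1 / real n) * (\<Sum>i<n. w i * (norm (h i - gf i xstar))\<^sup>2)))"
proof -
  note P = assms(1) and n1 = assms(2) and cvx = assms(3) and smi = assms(4) and sm = assms(5)
    and B = assms(7) and ind = assms(8)
  define Fa where "Fa = (\<lambda>x. (1 / real n) * (\<Sum>i<n. f i x))"
  define Ga where "Ga = (\<lambda>x. (1 / real n) *\<^sub>R (\<Sum>i<n. gf i x))"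
  define a where "a = (\<lambda>i. gf i xk - h i)"
  define c where "c = Ga xk - Ga xstar"
  define Mx where "Mx = Max ((\<lambda>i. Li i * w i) ` {..<n})"
  define Dk where "Dk = bregman Fa Ga xk xstar"
  define D where "D = (\<lambda>i. bregman (f i) (gf i) xk xstar)"
  define S where "S = (\<Sum>i<n. w i * (norm (h i - gf i xstar))\<^sup>2)"
  have npos: "real n > 0" using n1 by simp
  have pw: "(1 / real n) *\<^sub>R (\<Sum>i<n. h i + C i \<omega> (gf i xk - h i)) - (1 / real n) *\<^sub>R (\<Sum>i<n. gf i xstar)
        = c + (1 / real n) *\<^sub>R (\<Sum>i<n. C i \<omega> (a i) - a i)" for \<omega>
  proof -
    have "(\<Sum>i<n. h i + C i \<omega> (gf i xk - h i)) = (\<Sum>i<n. (C i \<omega> (a i) - a i) + gf i xk)"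
      by (rule sum.cong) (auto simp: a_def)
    also have "\<dots> = (\<Sum>i<n. C i \<omega> (a i) - a i) + (\<Sum>i<n. gf i xk)"
      by (rule sum.distrib)
    finally show ?thesis unfolding c_def Ga_def by (simp add: algebra_simps)
  qed
  have main: "(\<integral>\<^sup>+\<omega>. ennreal ((norm (c + (1 / real n) *\<^sub>R (\<Sum>i<n. C i \<omega> (a i) - a i)))\<^sup>2) \<partial>M)
         \<le> ennreal ((norm c)\<^sup>2 + (1 / real n)\<^sup>2 * (\<Sum>i<n. w i * (norm (a i))\<^sup>2))"
    by (rule prob_part[OF P B ind])
  have Fa_cvx: "convex_on UNIV Fa"
    unfolding Fa_def using npos by (intro convex_on_cmul convex_sum cvx) auto
  have c1: "(norm c)\<^sup>2 \<le> 2 * L * Dk"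
    unfolding c_def Dk_def by (rule cocoercive[OF Fa_cvx sm[folded Fa_def Ga_def]])
  have sumD: "Dk = (1 / real n) * (\<Sum>i<n. D i)"
    unfolding Dk_def D_def bregman_def Fa_def Ga_def
    by (simp add: inner_sum_left sum_subtractf right_diff_distrib)
  have per: "w i * (norm (a i))\<^sup>2 \<le> 4 * Mx * D i + 2 * (w i * (norm (h i - gf i xstar))\<^sup>2)"
    if "i < n" for i
  proof -
    have w0: "w i \<ge> 0" using B[OF that] unfolding in_B_def by auto
    have D0: "D i \<ge> 0"
      using tangent[OF cvx[OF that], of "gf i" xstar xk] smi[OF that]
      unfolding D_def bregman_def L_smooth_def by simp
    have dd: "(norm (gf i xk - gf i xstar))\<^sup>2 \<le> 2 * Li i * D i"
      unfolding D_def by (rule cocoercive[OF cvx[OF that] smi[OF that]])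
    have Mx: "Li i * w i \<le> Mx"
      unfolding Mx_def using that by (intro Max_ge) auto
    define p where "p = norm (gf i xk - gf i xstar)"
    define q where "q = norm (h i - gf i xstar)"
    have "a i = (gf i xk - gf i xstar) - (h i - gf i xstar)" by (simp add: a_def)
    then have "norm (a i) \<le> p + q" unfolding p_def q_def by (metis norm_triangle_ineq4)
    then have "(norm (a i))\<^sup>2 \<le> (p + q)\<^sup>2" by (intro power_mono) auto
    also have "\<dots> \<le> 2 * p\<^sup>2 + 2 * q\<^sup>2" using sum_squares_bound[of p q] by (simp add: power2_sum)
    finally have aq: "(norm (a i))\<^sup>2 \<le> 2 * p\<^sup>2 + 2 * q\<^sup>2" .
    have "w i * (norm (a i))\<^sup>2 \<le> w i * (2 * p\<^sup>2 + 2 * q\<^sup>2)" using aq w0 by (rule mult_left_mono)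
    also have "\<dots> = 2 * (w i * p\<^sup>2) + 2 * (w i * q\<^sup>2)" by (simp add: algebra_simps)
    also have "w i * p\<^sup>2 \<le> w i * (2 * Li i * D i)" using dd w0 unfolding p_def by (rule mult_left_mono)
    also have "w i * (2 * Li i * D i) = 2 * (Li i * w i) * D i" by simp
    also have "\<dots> \<le> 2 * Mx * D i" using Mx D0 by (intro mult_right_mono) auto
    finally show ?thesis unfolding q_def by simp
  qed
  have sumper: "(\<Sum>i<n. w i * (norm (a i))\<^sup>2) \<le> 4 * Mx * (real n * Dk) + 2 * S"
  proof -
    have "(\<Sum>i<n. w i * (norm (a i))\<^sup>2) \<le> (\<Sum>i<n. 4 * Mx * D i + 2 * (w i * (norm (h i - gf i xstar))\<^sup>2))"
      using per by (intro sum_mono) auto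
    also have "\<dots> = 4 * Mx * (\<Sum>i<n. D i) + 2 * S"
      unfolding S_def by (simp add: sum.distrib sum_distrib_left)
    also have "(\<Sum>i<n. D i) = real n * Dk" using sumD npos by simp
    finally show ?thesis .
  qed
  have real_bd: "(norm c)\<^sup>2 + (1 / real n)\<^sup>2 * (\<Sum>i<n. w i * (norm (a i))\<^sup>2)
      \<le> 2 * (L + 2 * Mx / real n) * Dk + (2 / real n) * ((1 / real n) * S)"
  proof -
    have "(1 / real n)\<^sup>2 * (\<Sum>i<n. w i * (norm (a i))\<^sup>2) \<le> (1 / real n)\<^sup>2 * (4 * Mx * (real n * Dk) + 2 * S)"
      using sumper by (intro mult_left_mono) auto
    also have "\<dots> = 4 * Mx / real n * Dk + (2 / real n) * ((1 / real n) * S)"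
      using npos by (simp add: field_simps power2_eq_square)
    finally show ?thesis using c1 by (simp add: algebra_simps)
  qed
  have "(\<integral>\<^sup>+\<omega>. ennreal ((norm ((1 / real n) *\<^sub>R (\<Sum>i<n. h i + C i \<omega> (gf i xk - h i))
                           - (1 / real n) *\<^sub>R (\<Sum>i<n. gf i xstar)))\<^sup>2) \<partial>M)
      = (\<integral>\<^sup>+\<omega>. ennreal ((norm (c + (1 / real n) *\<^sub>R (\<Sum>i<n. C i \<omega> (a i) - a i)))\<^sup>2) \<partial>M)"
    by (simp only: pw)
  also have "\<dots> \<le> ennreal ((norm c)\<^sup>2 + (1 / real n)\<^sup>2 * (\<Sum>i<n. w i * (norm (a i))\<^sup>2))" by (rule main)
  also have "\<dots> \<le> ennreal (2 * (L + 2 * Mx / real n) * Dk + (2 / real n) * ((1 / real n) * S))"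
    using real_bd by (rule ennreal_leI)
  finally show ?thesis unfolding Mx_def Dk_def S_def Fa_def Ga_def .
qed

end
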